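(* For positive semidefinite operators $A,B$, $\mathcal{R}_{A+B}(A)\le I$ in the positive semidefinite order.
   Context: All operators act on a finite-dimensional complex Hilbert space. For positive semidefinite $M$ and self-adjoint $\Delta$ supported in the support of $M$, $\mathcal{R}_M(\Delta)=2\int_0^\infty (M+sI)^{-1}\Delta(M+sI)^{-1}\Delta(M+sI)^{-1}\,ds$, which equals $-\frac{d^2}{dt^2}|_{t=0}\log(M+t\Delta)$. *)

theory Defs
  imports "HOL-Analysis.Analysis"
begin

definition herm_form :: "complex^'n^'n \<Rightarrow> complex^'n \<Rightarrow> complex" where
  "herm_form M x = (\<Sum>i\<in>UNIV. cnj (x $ i) * ((M *v x) $ i))"

text \<open>Positive semidefinite: x* M x is a nonnegative real for every x
  (over the complex numbers this includes self-adjointness).\<close>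
definition psd :: "complex^'n^'n \<Rightarrow> bool" where
  "psd M \<longleftrightarrow> (\<forall>x. herm_form M x \<in> \<real> \<and> 0 \<le> Re (herm_form M x))"

definition psd_le :: "complex^'n^'n \<Rightarrow> complex^'n^'n \<Rightarrow> bool" where
  "psd_le A B \<longleftrightarrow> psd (B - A)"

definition Rop :: "complex^'n^'n \<Rightarrow> complex^'n^'n \<Rightarrow> complex^'n^'n" where
  "Rop M D = 2 *\<^sub>R integral {0::real..}
     (\<lambda>s. matrix_inv (M + mat (complex_of_real s)) ** D **
          matrix_inv (M + mat (complex_of_real s)) ** D **
          matrix_inv (M + mat (complex_of_real s)))"

end

theory Submission
  imports Defs
begin


lemma mv_scaleR: "(G::complex^'n^'m) *v (c *\<^sub>R v) = c *\<^sub>R (G *v v)"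
  using linear_iff matrix_vector_mul_linear by blast

lemma mv_cscale: "(G::complex^'n^'m) *v (c *s v) = c *s (G *v v)"
  by (simp add: vec_eq_iff matrix_vector_mult_def sum_distrib_left mult.left_commute)

lemma mat_mv: "mat (complex_of_real s) *v (v::complex^'n) = s *\<^sub>R v"
proof -
  have "(mat (complex_of_real s) *v v) $ i = (s *\<^sub>R v) $ i" for i
  proof -
    have "(s *\<^sub>R v) $ i = complex_of_real s * v $ i" by (simp only: vector_scaleR_component) (simp add: scaleR_conv_of_real)
    moreover have "(mat (complex_of_real s) *v v) $ i = complex_of_real s * v $ i"
      by (simp add: matrix_vector_mult_def mat_def if_distrib if_distribR cong: if_cong)
    ultimately show ?thesis by simp
  qed
  then show ?thesis by (simp add: vec_eq_iff)
qed

lemma bl_mv: "bounded_linear (\<lambda>v. (G::complex^'n^'m) *v v)"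
  by (simp add: linear_conv_bounded_linear)

lemma Re_herm: "Re (herm_form G x) = x \<bullet> (G *v x)"
  by (simp add: herm_form_def inner_vec_def inner_complex_def Re_sum)

lemma Im_herm: "Im (herm_form G x) = (\<i> *s x) \<bullet> (G *v x)"
  by (simp add: herm_form_def inner_vec_def inner_complex_def Im_sum algebra_simps)

lemma J_anti: "(\<i> *s v) \<bullet> (x::complex^'n) = - ((\<i> *s x) \<bullet> v)"
  by (simp add: inner_vec_def inner_complex_def algebra_simps sum_negf[symmetric])

lemma J_J: "\<i> *s (\<i> *s (v::complex^'n)) = - v"
  by (simp add: vec_eq_iff)

lemma J_iso: "(\<i> *s a) \<bullet> (\<i> *s (b::complex^'n)) = a \<bullet> b"
  by (simp add: inner_vec_def inner_complex_def algebra_simps)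

lemma J_add: "\<i> *s (a + (b::complex^'n)) = \<i> *s a + \<i> *s b"
  by (simp add: vec_eq_iff algebra_simps)

definition sa :: "complex^'n^'n \<Rightarrow> bool" where
  "sa G \<longleftrightarrow> (\<forall>v w. (G *v v) \<bullet> w = v \<bullet> (G *v w))"

lemma psd_nonneg: "psd M \<Longrightarrow> 0 \<le> v \<bullet> (M *v v)"
  by (metis Re_herm psd_def)

lemma psd_sa:
  assumes "psd M" shows "sa M"
proof -
  have z: "(\<i> *s z) \<bullet> (M *v z) = 0" for z
    using assms unfolding psd_def by (metis Im_herm complex_is_Real_iff)
  have anti: "(\<i> *s x) \<bullet> (M *v y) = - ((\<i> *s y) \<bullet> (M *v x))" for x y
  proof -
    have "(\<i> *s (x+y)) \<bullet> (M *v (x+y)) = 0" by (rule z)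
    then have "(\<i> *s x) \<bullet> (M *v x) + (\<i> *s x) \<bullet> (M *v y) + (\<i> *s y) \<bullet> (M *v x) + (\<i> *s y) \<bullet> (M *v y) = 0"
      by (simp add: J_add matrix_vector_right_distrib inner_add_left inner_add_right)
    then show ?thesis using z[of x] z[of y] by simp
  qed
  show ?thesis unfolding sa_def
  proof (intro allI)
    fix v w
    have "(\<i> *s (\<i> *s v)) \<bullet> (M *v w) = - ((\<i> *s w) \<bullet> (M *v (\<i> *s v)))" by (rule anti)
    also have "\<dots> = - ((\<i> *s w) \<bullet> (\<i> *s (M *v v)))" by (simp add: mv_cscale)
    finally have "- (v \<bullet> (M *v w)) = - (w \<bullet> (M *v v))" by (simp add: J_J J_iso)
    then show "(M *v v) \<bullet> w = v \<bullet> (M *v w)" by (simp add: inner_commute)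
  qed
qed

lemma sa_real: 
  assumes "sa G" shows "Im (herm_form G x) = 0"
proof -
  have "Im (herm_form G x) = (\<i> *s x) \<bullet> (G *v x)" by (rule Im_herm)
  also have "\<dots> = (G *v (\<i> *s x)) \<bullet> x" using assms unfolding sa_def by metis
  also have "\<dots> = (\<i> *s (G *v x)) \<bullet> x" by (simp add: mv_cscale)
  also have "\<dots> = - ((\<i> *s x) \<bullet> (G *v x))" by (rule J_anti)
  finally show ?thesis using Im_herm[of G x] by simp
qed




definition NN :: "complex^'n^'n \<Rightarrow> real \<Rightarrow> complex^'n^'n" where
  "NN M s = M + mat (complex_of_real s)"
definition RR :: "complex^'n^'n \<Rightarrow> real \<Rightarrow> complex^'n^'n" where
  "RR M s = matrix_inv (NN M s)"

lemma NN_mv: "NN M s *v v = M *v v + s *\<^sub>R v"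
  by (simp add: NN_def matrix_vector_mult_add_rdistrib mat_mv)

context
  fixes M :: "complex^'n^'n"
  assumes saM: "sa M" and posM: "\<And>v. 0 \<le> v \<bullet> (M *v v)"
begin

lemma NN_sa: "sa (NN M s)"
  using saM by (simp add: sa_def NN_mv inner_add_left inner_add_right inner_commute)

lemma NN_ge: "s * (v \<bullet> v) \<le> v \<bullet> (NN M s *v v)"
  using posM[of v] by (simp add: NN_mv inner_add_right)

lemma NN_inv:
  assumes "s > 0" shows "invertible (NN M s)"
proof -
  have "inj ((*v) (NN M s))"
  proof (rule injI)
    fix v w assume "NN M s *v v = NN M s *v w"
    then have "NN M s *v (v - w) = 0" by (simp add: matrix_vector_mult_diff_distrib)
    then have "s * ((v - w) \<bullet> (v - w)) \<le> 0" using NN_ge[of s "v - w"] by simp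
    then have "(v - w) \<bullet> (v - w) \<le> 0" using assms by (simp add: mult_le_0_iff)
    then have "(v - w) \<bullet> (v - w) = 0" using inner_ge_zero[of "v - w"] by linarith
    then show "v = w" by simp
  qed
  then show ?thesis by (simp add: invertible_left_inverse matrix_left_invertible_injective)
qed

lemma RR_props:
  assumes "s > 0" shows "NN M s ** RR M s = mat 1 \<and> RR M s ** NN M s = mat 1"
  using NN_inv[OF assms] unfolding RR_def matrix_inv_def invertible_def
  by (rule someI_ex)

lemma RR_left: "s > 0 \<Longrightarrow> RR M s *v (NN M s *v v) = v"
  by (metis RR_props matrix_vector_mul_assoc matrix_vector_mul_lid)

lemma RR_right: "s > 0 \<Longrightarrow> NN M s *v (RR M s *v v) = v"
  by (metis RR_props matrix_vector_mul_assoc matrix_vector_mul_lid)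

lemma RR_sa: assumes "s > 0" shows "sa (RR M s)"
  unfolding sa_def
proof (intro allI)
  fix v w
  have "(RR M s *v v) \<bullet> w = (RR M s *v v) \<bullet> (NN M s *v (RR M s *v w))" by (simp add: RR_right assms)
  also have "\<dots> = (NN M s *v (RR M s *v v)) \<bullet> (RR M s *v w)" using NN_sa by (simp add: sa_def)
  finally show "(RR M s *v v) \<bullet> w = v \<bullet> (RR M s *v w)" by (simp add: RR_right assms)
qed

lemma RR_nonneg: assumes "s > 0" shows "0 \<le> v \<bullet> (RR M s *v v)"
proof -
  have "v \<bullet> (RR M s *v v) = (NN M s *v (RR M s *v v)) \<bullet> (RR M s *v v)" by (simp add: RR_right assms)
  also have "\<dots> = (RR M s *v v) \<bullet> (NN M s *v (RR M s *v v))" by (simp add: inner_commute)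
  finally show ?thesis using NN_ge[of s "RR M s *v v"] assms
    by (metis inner_ge_zero mult_nonneg_nonneg order.trans less_imp_le)
qed

lemma RR_bound: assumes "s > 0" shows "norm (RR M s *v v) \<le> norm v / s"
proof -
  let ?y = "RR M s *v v"
  have "s * (norm ?y)^2 \<le> ?y \<bullet> (NN M s *v ?y)" using NN_ge[of s ?y] by (simp add: power2_norm_eq_inner)
  also have "\<dots> = ?y \<bullet> v" by (simp add: RR_right assms)
  also have "\<dots> \<le> norm ?y * norm v" by (rule norm_cauchy_schwarz)
  finally have h: "s * (norm ?y)^2 \<le> norm ?y * norm v" .
  show ?thesis
  proof (cases "norm ?y = 0")
    case True then show ?thesis using assms by simp
  next
    case False
    then have "s * norm ?y \<le> norm v" using h by (simp add: power2_eq_square)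
    then show ?thesis using assms by (simp add: field_simps)
  qed
qed

lemma resolvent:
  assumes "s > 0" "t > 0"
  shows "RR M t *v v - RR M s *v v = (s - t) *\<^sub>R (RR M t *v (RR M s *v v))"
proof -
  have "NN M t *v (RR M s *v v) = NN M s *v (RR M s *v v) + (t - s) *\<^sub>R (RR M s *v v)"
    by (simp add: NN_mv algebra_simps)
  then have e: "NN M t *v (RR M s *v v) = v + (t - s) *\<^sub>R (RR M s *v v)"
    by (simp add: RR_right assms)
  have "RR M s *v v = RR M t *v (NN M t *v (RR M s *v v))" by (simp add: RR_left assms)
  also have "\<dots> = RR M t *v v + (t - s) *\<^sub>R (RR M t *v (RR M s *v v))"
    by (simp add: e matrix_vector_right_distrib mv_scaleR)
  finally show ?thesis by (simp add: algebra_simps)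
qed

lemma RR_deriv:
  assumes "s > 0"
  shows "((\<lambda>t. RR M t *v v) has_vector_derivative - (RR M s *v (RR M s *v v))) (at s)"
proof -
  let ?w = "RR M s *v v"
  let ?z = "RR M s *v ?w"
  have "s/2 < s" using assms by simp
  from order_tendstoD(1)[OF tendsto_ident_at this]
  have ev: "\<forall>\<^sub>F y in at s. s/2 < y" .
  have lim: "((\<lambda>y. norm ((RR M y *v v - RR M s *v v) - (y - s) *\<^sub>R (- ?z)) / norm (y - s)) \<longlongrightarrow> 0) (at s)"
  proof (rule Lim_null_comparison)
    show "\<forall>\<^sub>F y in at s. norm (norm ((RR M y *v v - RR M s *v v) - (y - s) *\<^sub>R (- ?z)) / norm (y - s)) \<le> \<bar>y - s\<bar> * (2 * norm ?z / s)"
      using ev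
    proof (rule eventually_mono)
      fix y assume y: "s/2 < y"
      then have yp: "y > 0" using assms by simp
      have r1: "RR M y *v v - RR M s *v v = (s - y) *\<^sub>R (RR M y *v ?w)" by (rule resolvent[OF assms yp])
      have r2: "RR M y *v ?w - ?z = (s - y) *\<^sub>R (RR M y *v ?z)" by (rule resolvent[OF assms yp])
      have "(RR M y *v v - RR M s *v v) - (y - s) *\<^sub>R (- ?z) = (s - y) *\<^sub>R (RR M y *v ?w - ?z)"
        by (simp add: r1 algebra_simps)
      also have "\<dots> = ((s - y) * (s - y)) *\<^sub>R (RR M y *v ?z)" by (simp add: r2)
      finally have eq: "(RR M y *v v - RR M s *v v) - (y - s) *\<^sub>R (- ?z) = ((s - y) * (s - y)) *\<^sub>R (RR M y *v ?z)" .
      have b: "norm (RR M y *v ?z) \<le> norm ?z / y" by (rule RR_bound[OF yp])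
      also have "\<dots> \<le> 2 * norm ?z / s"
      proof -
        have "s * norm ?z \<le> (y*2) * norm ?z" using y by (intro mult_right_mono) auto
        then show ?thesis using assms yp by (simp add: field_simps)
      qed
      finally have b2: "norm (RR M y *v ?z) \<le> 2 * norm ?z / s" .
      show "norm (norm ((RR M y *v v - RR M s *v v) - (y - s) *\<^sub>R (- ?z)) / norm (y - s)) \<le> \<bar>y - s\<bar> * (2 * norm ?z / s)"
      proof (cases "y = s")
        case True then show ?thesis by simp
      next
        case False
        have "norm (norm ((RR M y *v v - RR M s *v v) - (y - s) *\<^sub>R (- ?z)) / norm (y - s))
              = \<bar>y - s\<bar> * norm (RR M y *v ?z)"
        proof -
          have n: "norm ((RR M y *v v - RR M s *v v) - (y - s) *\<^sub>R (- ?z)) = \<bar>y - s\<bar> * \<bar>y - s\<bar> * norm (RR M y *v ?z)"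
            unfolding eq by (simp add: abs_mult abs_minus_commute)
          have "norm (norm ((RR M y *v v - RR M s *v v) - (y - s) *\<^sub>R (- ?z)) / norm (y - s)) = norm ((RR M y *v v - RR M s *v v) - (y - s) *\<^sub>R (- ?z)) / \<bar>y - s\<bar>"
            by simp
          then show ?thesis using False by (simp only: n) (simp del: abs_mult_self_eq)
        qed
        also have "\<dots> \<le> \<bar>y - s\<bar> * (2 * norm ?z / s)" by (rule mult_left_mono[OF b2]) simp
        finally show ?thesis .
      qed
    qed
    show "((\<lambda>y. \<bar>y - s\<bar> * (2 * norm ?z / s)) \<longlongrightarrow> 0) (at s)"
      by (rule tendsto_eq_intros | simp)+
  qed
  show ?thesis unfolding has_vector_derivative_def has_derivative_iff_norm
    using lim by simp (intro bounded_linear_minus bounded_linear_scaleR_left)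
qed

end



lemma inner_vderiv:
  assumes "(f has_vector_derivative f') (at s)" "(g has_vector_derivative g') (at s)"
  shows "((\<lambda>t. f t \<bullet> g t) has_real_derivative (f s \<bullet> g' + f' \<bullet> g s)) (at s)"
  unfolding has_real_derivative_iff_has_vector_derivative
  by (rule bounded_bilinear.has_vector_derivative[OF bounded_bilinear_inner assms])

lemma sa_eq: "sa G \<Longrightarrow> (G *v v) \<bullet> w = v \<bullet> (G *v w)"
  by (simp add: sa_def)

context
  fixes A B :: "complex^'n^'n" and x :: "complex^'n"
  assumes saA: "sa A" and saB: "sa B" and posA: "\<And>v. 0 \<le> v \<bullet> (A *v v)"
    and posB: "\<And>v. 0 \<le> v \<bullet> (B *v v)"
begin

lemma saM: "sa (A + B)"
  using saA saB by (simp add: sa_def matrix_vector_mult_add_rdistrib inner_add_left inner_add_right)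

lemma posM: "0 \<le> v \<bullet> ((A + B) *v v)"
  using posA[of v] posB[of v] by (simp add: matrix_vector_mult_add_rdistrib inner_add_right)

abbreviation "R \<equiv> RR (A + B)"
abbreviation "N \<equiv> NN (A + B)"

definition "uu s = R s *v x"
definition "rr s = R s *v uu s"
definition "VV s = s^2 * (uu s \<bullet> uu s) + 2 * s * (uu s \<bullet> (A *v uu s))"
definition "VD s = 2 * s * (uu s \<bullet> uu s) - 2 * s^2 * (uu s \<bullet> rr s) + 2 * (uu s \<bullet> (A *v uu s))
   - 2 * s * (rr s \<bullet> (A *v uu s) + uu s \<bullet> (A *v rr s))"
definition "FF s = R s ** A ** R s ** A ** R s"
definition "GG s = x \<bullet> (FF s *v x)"

lemmas RRl = RR_left[OF saM posM] 
lemmas RRr = RR_right[OF saM posM]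
lemmas RRsa = RR_sa[OF saM posM]
lemmas RRnn = RR_nonneg[OF saM posM]
lemmas NNsa = NN_sa[OF saM posM]
lemmas NNge = NN_ge[OF saM posM]

lemma FF_mv: "FF s *v v = R s *v (A *v (R s *v (A *v (R s *v v))))"
  by (simp add: FF_def matrix_vector_mul_assoc[symmetric])

lemma FF_sa: "s > 0 \<Longrightarrow> sa (FF s)"
  using sa_eq[OF RRsa] sa_eq[OF saA] by (simp add: sa_def FF_mv)

lemma GG_eq: "s > 0 \<Longrightarrow> GG s = (A *v uu s) \<bullet> (R s *v (A *v uu s))"
  using sa_eq[OF RRsa, of s] sa_eq[OF saA] by (simp add: GG_def FF_mv uu_def)

lemma GG_nonneg: "s > 0 \<Longrightarrow> 0 \<le> GG s"
  by (simp add: GG_eq RRnn)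

lemma uu_deriv: "s > 0 \<Longrightarrow> (uu has_vector_derivative - rr s) (at s)"
  unfolding uu_def[abs_def] rr_def uu_def by (rule RR_deriv[OF saM posM])

lemma VV_deriv: assumes "s > 0" shows "(VV has_real_derivative VD s) (at s)"
proof -
  have du: "(uu has_vector_derivative - rr s) (at s)" by (rule uu_deriv[OF assms])
  have dAu: "((\<lambda>t. A *v uu t) has_vector_derivative A *v (- rr s)) (at s)"
    by (rule bounded_linear.has_vector_derivative[OF bl_mv du])
  have dp: "((\<lambda>t. uu t \<bullet> uu t) has_real_derivative (uu s \<bullet> (- rr s) + (- rr s) \<bullet> uu s)) (at s)"
    by (rule inner_vderiv[OF du du])
  have dq: "((\<lambda>t. uu t \<bullet> (A *v uu t)) has_real_derivative (uu s \<bullet> (A *v (- rr s)) + (- rr s) \<bullet> (A *v uu s))) (at s)"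
    by (rule inner_vderiv[OF du dAu])
  have d1: "((\<lambda>t. t ^ 2) has_real_derivative (2 * s)) (at s)" by (auto intro!: derivative_eq_intros)
  have d2: "((\<lambda>t. 2 * t) has_real_derivative 2) (at s)" by (auto intro!: derivative_eq_intros)
  note D = DERIV_add[OF DERIV_mult[OF d1 dp] DERIV_mult[OF d2 dq]]
  have "(2 * s * (uu s \<bullet> uu s) + (uu s \<bullet> - rr s + - rr s \<bullet> uu s) * s\<^sup>2 +
     (2 * (uu s \<bullet> (A *v uu s)) + (uu s \<bullet> (A *v - rr s) + - rr s \<bullet> (A *v uu s)) * (2 * s))) = VD s"
    by (simp add: VD_def inner_commute[of "rr s" "uu s"] algebra_simps
        mv_scaleR[of A "-1", simplified])
  note D = D[unfolded this]
  show ?thesis using D unfolding VV_def[abs_def] by simp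
qed


lemma VV_bounds: assumes "s > 0" shows "0 \<le> VV s \<and> VV s \<le> x \<bullet> x"
proof
  show "0 \<le> VV s" unfolding VV_def using posA[of "uu s"] assms by simp
  let ?u = "uu s"
  have x: "x = (A + B) *v ?u + s *\<^sub>R ?u" using RRr[OF assms, of x] by (simp add: uu_def NN_mv)
  have "x \<bullet> x = ((A + B) *v ?u) \<bullet> ((A + B) *v ?u) + 2 * s * (?u \<bullet> ((A + B) *v ?u)) + s^2 * (?u \<bullet> ?u)"
    by (subst (1 2) x) (simp add: inner_add_left inner_add_right inner_commute power2_eq_square algebra_simps)
  also have "\<dots> = ((A + B) *v ?u) \<bullet> ((A + B) *v ?u) + 2 * s * (?u \<bullet> (B *v ?u)) + VV s"
    by (simp add: VV_def matrix_vector_mult_add_rdistrib inner_add_right algebra_simps)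
  finally show "VV s \<le> x \<bullet> x" using posB[of ?u] assms by simp
qed

lemma key_ineq: assumes "s > 0" shows "2 * GG s \<le> VD s"
proof -
  let ?u = "uu s" and ?r = "rr s"
  define y where "y = A *v ?u"
  define z where "z = B *v ?u"
  define q where "q = R s *v z"
  define w where "w = R s *v y"
  have Nu: "N s *v ?u = x" by (simp add: uu_def RRr assms)
  have Nr: "N s *v ?r = ?u" by (simp add: rr_def RRr assms)
  have Nq: "N s *v q = z" by (simp add: q_def RRr assms)
  have y: "y = x - s *\<^sub>R ?u - z"
    using Nu by (simp add: y_def z_def NN_mv matrix_vector_mult_add_rdistrib algebra_simps)
  have "N s *v (?u - s *\<^sub>R ?r - q) = y"
    by (simp add: matrix_vector_mult_diff_distrib mv_scaleR Nu Nr Nq y)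
  then have w: "w = ?u - s *\<^sub>R ?r - q" using RRl[OF assms] by (metis w_def)
  have G: "GG s = y \<bullet> w" by (simp add: GG_eq assms y_def w_def)
  have e1: "?r \<bullet> x = ?u \<bullet> ?u"
  proof -
    have "?r \<bullet> x = ?r \<bullet> (N s *v ?u)" by (simp add: Nu)
    also have "\<dots> = (N s *v ?r) \<bullet> ?u" using sa_eq[OF NNsa, of s ?r ?u] by simp
    finally show ?thesis by (simp add: Nr)
  qed
  have e2: "x \<bullet> q = ?u \<bullet> z"
  proof -
    have "x \<bullet> q = (N s *v ?u) \<bullet> q" by (simp add: Nu)
    also have "\<dots> = ?u \<bullet> (N s *v q)" using sa_eq[OF NNsa, of s ?u q] by simp
    finally show ?thesis by (simp add: Nq)
  qed
  have e3: "?u \<bullet> q = ?r \<bullet> z"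
  proof -
    have "?u \<bullet> q = (N s *v ?r) \<bullet> q" by (simp add: Nr)
    also have "\<dots> = ?r \<bullet> (N s *v q)" using sa_eq[OF NNsa, of s ?r q] by simp
    finally show ?thesis by (simp add: Nq)
  qed
  have e4: "?u \<bullet> (A *v ?r) = y \<bullet> ?r"
    using sa_eq[OF saA, of ?u ?r] by (simp add: y_def)
  have cs: "z \<bullet> q \<le> ?u \<bullet> z"
  proof -
    have p: "0 \<le> (?u - q) \<bullet> (B *v (?u - q))" by (rule posB)
    have nq: "q \<bullet> z = q \<bullet> (A *v q) + q \<bullet> (B *v q) + s * (q \<bullet> q)"
      using Nq[symmetric] by (simp add: NN_mv matrix_vector_mult_add_rdistrib inner_add_right)
    have bq: "q \<bullet> (B *v q) \<le> q \<bullet> z"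
      using nq posA[of q] assms inner_ge_zero[of q] by (simp add: mult_nonneg_nonneg)
    have s1: "?u \<bullet> (B *v q) = z \<bullet> q" using sa_eq[OF saB, of ?u q] by (simp add: z_def)
    have s2: "q \<bullet> (B *v ?u) = z \<bullet> q" by (simp add: z_def inner_commute)
    have "(?u - q) \<bullet> (B *v (?u - q)) = ?u \<bullet> z - 2 * (z \<bullet> q) + q \<bullet> (B *v q)"
      using s1 s2 by (simp add: z_def[symmetric] matrix_vector_mult_diff_distrib inner_diff_left inner_diff_right)
    then show ?thesis using p bq by (simp add: inner_commute)
  qed
  have yr: "y \<bullet> ?r = ?u \<bullet> ?u - s * (?u \<bullet> ?r) - ?r \<bullet> z"
  proof -
    have "y \<bullet> ?r = x \<bullet> ?r - s * (?u \<bullet> ?r) - z \<bullet> ?r" by (simp add: y inner_diff_left)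
    then show ?thesis using e1 inner_commute[of x ?r] inner_commute[of z ?r] by simp
  qed
  have yq: "y \<bullet> q = ?u \<bullet> z - s * (?r \<bullet> z) - z \<bullet> q"
    using e2 e3 by (simp add: y inner_diff_left)
  have G2: "GG s = ?u \<bullet> y - s * (?u \<bullet> ?u - s * (?u \<bullet> ?r) - ?r \<bullet> z) - (?u \<bullet> z - s * (?r \<bullet> z) - z \<bullet> q)"
    unfolding G w using yr yq by (simp add: inner_diff_right inner_commute)
  have VD: "VD s = 2 * s * (?u \<bullet> ?u) - 2 * s^2 * (?u \<bullet> ?r) + 2 * (?u \<bullet> y) - 2 * s * (2 * (?u \<bullet> ?u - s * (?u \<bullet> ?r) - ?r \<bullet> z))"
    unfolding VD_def using e4 yr by (simp add: y_def[symmetric] inner_commute[of ?r y])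
  show ?thesis unfolding G2 VD using cs by (simp add: algebra_simps power2_eq_square)
qed


lemma sub_bound:
  assumes a: "0 < a" and ab: "a \<le> b" and intab: "GG integrable_on {a..b}"
  shows "integral {a..b} GG \<le> x \<bullet> x / 2"
proof -
  have h1: "(VD has_integral (VV b - VV a)) {a..b}"
  proof (rule fundamental_theorem_of_calculus[OF ab])
    fix t assume "t \<in> {a..b}"
    then have "t > 0" using a by auto
    then show "(VV has_vector_derivative VD t) (at t within {a..b})"
      using VV_deriv has_vector_derivative_at_within
      unfolding has_real_derivative_iff_has_vector_derivative by blast
  qed
  have h2: "((\<lambda>t. 2 * GG t) has_integral (2 * integral {a..b} GG)) {a..b}"
    by (rule has_integral_mult_right) (use intab in blast)
  have "2 * integral {a..b} GG \<le> VV b - VV a"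
    by (rule has_integral_le[OF h2 h1]) (use a key_ineq in auto)
  moreover have "0 \<le> VV a" "VV b \<le> x \<bullet> x" using VV_bounds a ab by auto
  ultimately show ?thesis by simp
qed

lemma int_bound:
  assumes int: "GG integrable_on {0..}"
  shows "integral {0..} GG \<le> x \<bullet> x / 2"
proof -
  let ?S = "{0<..} :: real set"
  have neg: "negligible ({0..} - ?S)" "negligible (?S - {0..})"
    by (auto intro: negligible_subset[OF negligible_sing[of 0]])
  have intS: "GG integrable_on ?S"
    using int integrable_spike_set_eq[of "{0..}" ?S] neg negligible_Un by blast
  have eqI: "integral {0..} GG = integral ?S GG"
    by (rule integral_spike_set) (auto intro: negligible_subset[OF negligible_sing[of 0]])
  define f where "f k = (\<lambda>s. if s \<in> {1 / real (Suc k)..real (Suc k)} then GG s else 0)" for k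
  have ab: "1 / real (Suc k) \<le> real (Suc k)" for k
    by (simp add: field_simps)
  have ivpos: "0 < t" if "t \<in> {1 / real (Suc k)..real (Suc k)}" for k t
  proof -
    have "0 < 1 / real (Suc k)" by simp
    moreover have "1 / real (Suc k) \<le> t" using that by (simp only: atLeastAtMost_iff)
    ultimately show ?thesis by linarith
  qed
  have iv: "{1 / real (Suc k)..real (Suc k)} \<inter> ?S = {1 / real (Suc k)..real (Suc k)}" for k
    using ivpos by auto
  have intk: "GG integrable_on {1 / real (Suc k)..real (Suc k)}" for k
    by (rule integrable_on_subinterval[OF intS]) (use ivpos in blast)
  have fint: "f k integrable_on ?S" for k
    unfolding f_def integrable_restrict_Int iv by (rule intk)
  have fI: "integral ?S (f k) = integral {1 / real (Suc k)..real (Suc k)} GG" for k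
    unfolding f_def integral_restrict_Int iv ..
  have fle: "integral ?S (f k) \<le> x \<bullet> x / 2" for k
    unfolding fI by (rule sub_bound[OF _ ab intk]) simp
  have fge: "0 \<le> integral ?S (f k)" for k
    unfolding fI by (rule integral_nonneg[OF intk]) (use ivpos GG_nonneg in blast)
  have mono: "f k s \<le> f (Suc k) s" if "s \<in> ?S" for k s
  proof -
    have "1 / real (Suc (Suc k)) \<le> 1 / real (Suc k)" by (simp add: frac_le)
    then show ?thesis using that GG_nonneg[of s] by (auto simp: f_def)
  qed
  have lim: "((\<lambda>k. f k s) \<longlongrightarrow> GG s) sequentially" if "s \<in> ?S" for s
  proof (rule tendsto_eventually)
    from that have sp: "s > 0" by simp
    obtain K :: nat where K: "max s (1/s) < real K" using reals_Archimedean2 by blast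
    show "\<forall>\<^sub>F k in sequentially. f k s = GG s"
      unfolding eventually_sequentially
    proof (intro exI allI impI)
      fix k assume "K \<le> k"
      then have kK: "real K \<le> real (Suc k)" by simp
      have "1 / s < real (Suc k)" using K kK by linarith
      then have "1 / real (Suc k) \<le> s" using sp by (simp add: field_simps)
      moreover have "s \<le> real (Suc k)" using K kK by linarith
      ultimately show "f k s = GG s" by (simp add: f_def)
    qed
  qed
  have bnd: "bounded (range (\<lambda>k. integral ?S (f k)))"
    unfolding bounded_iff using fle fge by (intro exI[of _ "x \<bullet> x / 2"]) auto
  have "((\<lambda>k. integral ?S (f k)) \<longlongrightarrow> integral ?S GG) sequentially"
    using monotone_convergence_increasing[OF fint mono lim bnd] by blast
  then have "integral ?S GG \<le> x \<bullet> x / 2"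
    by (rule LIMSEQ_le_const2) (use fle in blast)
  then show ?thesis by (simp add: eqI)
qed

end



lemma bl_mat_apply: "bounded_linear (\<lambda>G::complex^'n^'n. G *v v)"
proof -
  have "linear (\<lambda>G::complex^'n^'n. G *v v)"
    by (rule linearI) (simp_all add: vec_eq_iff matrix_vector_mult_def scaleR_sum_right sum.distrib distrib_right)
  then show ?thesis by (simp add: linear_conv_bounded_linear)
qed

lemma bl_form: "bounded_linear (\<lambda>G::complex^'n^'n. w \<bullet> (G *v v))"
  by (rule bounded_linear_inner_right_comp[OF bl_mat_apply])

theorem lemma5:
  fixes A B :: "complex^'n^'n"
  assumes "psd A" and "psd B"
  shows "psd_le (Rop (A + B) A) (mat 1)"
proof -
  have saA: "sa A" and saB: "sa B" using assms psd_sa by auto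
  have posA: "\<And>v. 0 \<le> v \<bullet> (A *v v)" and posB: "\<And>v. 0 \<le> v \<bullet> (B *v v)"
    using assms psd_nonneg by auto
  define F where "F = (\<lambda>s. matrix_inv (A + B + mat (complex_of_real s)) ** A **
          matrix_inv (A + B + mat (complex_of_real s)) ** A **
          matrix_inv (A + B + mat (complex_of_real s)))"
  define I where "I = integral {0::real..} F"
  have Rop: "Rop (A + B) A = 2 *\<^sub>R I" by (simp add: Rop_def I_def F_def)
  have FF: "F = FF A B" by (simp add: fun_eq_iff F_def FF_def[OF saA saB posA posB] RR_def NN_def)
  show ?thesis unfolding psd_le_def psd_def
  proof (intro allI conjI)
    fix v :: "complex^'n"
    have bounds: "v \<bullet> (I *v v) \<le> v \<bullet> v / 2 \<and> (\<i> *s v) \<bullet> (I *v v) = 0"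
    proof (cases "F integrable_on {0..}")
      case False
      then have "I = 0" by (simp add: I_def not_integrable_integral)
      then show ?thesis by simp
    next
      case True
      have e1: "v \<bullet> (I *v v) = integral {0..} (\<lambda>s. v \<bullet> (F s *v v))"
        using integral_linear[OF True bl_form[of v v]] by (simp add: I_def o_def)
      have i1: "(\<lambda>s. v \<bullet> (F s *v v)) integrable_on {0..}"
        using integrable_linear[OF True bl_form[of v v]] by (simp add: o_def)
      have G: "(\<lambda>s. v \<bullet> (F s *v v)) = GG A B v" by (simp add: fun_eq_iff FF GG_def[OF saA saB posA posB])
      have b1: "v \<bullet> (I *v v) \<le> v \<bullet> v / 2"
        using int_bound[OF saA saB posA posB, of v] i1 e1 G by simp
      have e2: "(\<i> *s v) \<bullet> (I *v v) = integral {0..} (\<lambda>s. (\<i> *s v) \<bullet> (F s *v v))"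
        using integral_linear[OF True bl_form[of "\<i> *s v" v]] by (simp add: I_def o_def)
      also have "\<dots> = integral {0..} (\<lambda>s::real. 0::real)"
      proof (rule integral_spike[where S="{0}" and T="{0..}" and g="\<lambda>s. 0::real" and f="\<lambda>s. (\<i> *s v) \<bullet> (F s *v v)"])
        fix s :: real assume "s \<in> {0..} - {0}"
        then have sp: "s > 0" by auto
        have "sa (F s)" using FF_sa[OF saA saB posA posB sp] by (simp add: FF)
        then show "0 = (\<i> *s v) \<bullet> (F s *v v)" using sa_real[of "F s" v] Im_herm[of "F s" v] by simp
      qed simp
      finally show ?thesis using b1 by simp
    qed
    have m: "(mat 1 - 2 *\<^sub>R I) *v v = v - 2 *\<^sub>R (I *v v)"
    proof -
      have "(2 *\<^sub>R I) *v v = 2 *\<^sub>R (I *v v)"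
        by (simp add: vec_eq_iff matrix_vector_mult_def scaleR_sum_right)
      then show ?thesis by (simp add: matrix_vector_mult_diff_rdistrib)
    qed
    have Jv: "(\<i> *s v) \<bullet> v = 0" using J_anti[of v v] by simp
    have im: "Im (herm_form (mat 1 - Rop (A + B) A) v) = 0"
      unfolding Im_herm Rop m using bounds Jv by (simp add: inner_diff_right)
    show "herm_form (mat 1 - Rop (A + B) A) v \<in> \<real>"
      using im by (simp add: complex_is_Real_iff)
    show "0 \<le> Re (herm_form (mat 1 - Rop (A + B) A) v)"
      unfolding Re_herm Rop m using bounds by (simp add: inner_diff_right)
  qed
qed


end
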